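(* The splitting graph $\mathrm{Spltg}(B_G)$ of the bull graph $B_G$ admits a signed product cordial labeling.
   Context: A graph $G$ is signed product cordial if there is a vertex labeling $\alpha: V(G)\to\{1,-1\}$ such that, with the induced edge labeling $\alpha^*(uv)=\alpha(u)\alpha(v)$, we have $|v_\alpha(-1)-v_\alpha(1)|\le 1$ and $|e_{\alpha^*}(-1)-e_{\alpha^*}(1)|\le 1$. Here $v_\alpha(x)$ is the number of vertices labeled $x$ and $e_{\alpha^*}(x)$ is the number of edges labeled $x$; such an $\alpha$ is called a signed product cordial labeling. The splitting graph $\mathrm{Spltg}(G)$ of a graph $G$ is obtained from $G$ by adding, for each vertex $v$ of $G$, a new vertex $v'$ made adjacent to exactly the neighbors of $v$ in $G$. The bull graph $B_G$ has vertices $v_1,\dots,v_5$ and edges $v_1v_2, v_2v_3, v_3v_4, v_4v_5, v_2v_4$. Equivalently, it is a triangle $v_2v_3v_4$ with a pendant vertex attached at $v_2$ and another at $v_4$. *)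

theory Defs
  imports Main
begin

definition simple_graph :: "'a set \<Rightarrow> 'a set set \<Rightarrow> bool" where
  "simple_graph V E \<longleftrightarrow> finite V \<and> (\<forall>e\<in>E. e \<subseteq> V \<and> card e = 2)"

definition edge_label :: "('a \<Rightarrow> int) \<Rightarrow> 'a set \<Rightarrow> int" where
  "edge_label f e = (\<Prod>v\<in>e. f v)"

definition signed_product_cordial_labeling ::
  "'a set \<Rightarrow> 'a set set \<Rightarrow> ('a \<Rightarrow> int) \<Rightarrow> bool" where
  "signed_product_cordial_labeling V E f \<longleftrightarrow>
     (\<forall>v\<in>V. f v = 1 \<or> f v = -1) \<and>
     \<bar>int (card {v\<in>V. f v = -1}) - int (card {v\<in>V. f v = 1})\<bar> \<le> 1 \<and>
     \<bar>int (card {e\<in>E. edge_label f e = -1}) - int (card {e\<in>E. edge_label f e = 1})\<bar> \<le> 1"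

definition signed_product_cordial :: "'a set \<Rightarrow> 'a set set \<Rightarrow> bool" where
  "signed_product_cordial V E \<longleftrightarrow> (\<exists>f. signed_product_cordial_labeling V E f)"

text \<open>Splitting graph: original vertex v is Inl v, its new copy v' is Inr v.
  Edges: all edges of G, plus {v', w} for every edge {v,w} of G.\<close>
definition splitting_vertices :: "'a set \<Rightarrow> ('a + 'a) set" where
  "splitting_vertices V = Inl ` V \<union> Inr ` V"

definition splitting_edges :: "'a set set \<Rightarrow> ('a + 'a) set set" where
  "splitting_edges E =
     {{Inl u, Inl w} | u w. {u, w} \<in> E} \<union>
     {{Inr u, Inl w} | u w. {u, w} \<in> E}"

definition bull_vertices :: "nat set" where
  "bull_vertices = {1, 2, 3, 4, 5}"

definition bull_edges :: "nat set set" where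
  "bull_edges = {{1, 2}, {2, 3}, {3, 4}, {4, 5}, {2, 4}}"

end

theory Submission
  imports Defs
begin

lemma comp_insert:
  assumes "a \<noteq> b"
  shows "{f u w | u w. {u, w} \<in> insert {a, b} E} = insert (f a b) (insert (f b a) {f u w | u w. {u, w} \<in> E})"
  using assms by (auto simp: doubleton_eq_iff)

lemma comp_empty: "{f u w | u w. {u, w} \<in> {}} = {}"
  by auto

lemma E_eq: "splitting_edges bull_edges = ({{Inl 1, Inl 2}, {Inl 2, Inl 1}, {Inl 2, Inl 3}, {Inl 3, Inl 2}, {Inl 3, Inl 4}, {Inl 4, Inl 3}, {Inl 4, Inl 5}, {Inl 5, Inl 4}, {Inl 2, Inl 4}, {Inl 4, Inl 2}, {Inr 1, Inl 2}, {Inr 2, Inl 1}, {Inr 2, Inl 3}, {Inr 3, Inl 2}, {Inr 3, Inl 4}, {Inr 4, Inl 3}, {Inr 4, Inl 5}, {Inr 5, Inl 4}, {Inr 2, Inl 4}, {Inr 4, Inl 2}} :: (nat + nat) set set)"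
  unfolding splitting_edges_def bull_edges_def
  apply (subst comp_insert, simp)+
  apply (simp only: comp_empty Un_insert_left Un_empty_left)
  done

lemma V_eq: "splitting_vertices bull_vertices = {Inl 1, Inl 2, Inl 3, Inl 4, Inl 5, Inr 1, Inr 2, Inr 3, Inr 4, Inr (5::nat)}"
  unfolding splitting_vertices_def bull_vertices_def
  by (simp only: image_insert image_empty Un_insert_left Un_empty_left)

definition lab :: "nat + nat \<Rightarrow> int" where
  "lab x = (case x of Inl v \<Rightarrow> (if v = 5 then -1 else 1) | Inr v \<Rightarrow> (if v = 2 then 1 else -1))"

lemma filt_insert: "{e \<in> insert a A. P e} = (if P a then {a} else {}) \<union> {e \<in> A. P e}"
  by auto

lemma filt_empty: "{e \<in> {}. P e} = {}" by auto

lemma C: "card {v \<in> splitting_vertices bull_vertices. lab v = -1} = 5"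
  "card {v \<in> splitting_vertices bull_vertices. lab v = 1} = 5"
  "card {e \<in> splitting_edges bull_edges. edge_label lab e = -1} = 7"
  "card {e \<in> splitting_edges bull_edges. edge_label lab e = 1} = 8"
  unfolding V_eq E_eq
  by (simp_all only: filt_insert filt_empty) (simp_all add: card_insert_if doubleton_eq_iff edge_label_def lab_def)

lemma L: "\<forall>v\<in>splitting_vertices bull_vertices. lab v = 1 \<or> lab v = -1"
  by (auto simp: splitting_vertices_def bull_vertices_def lab_def)

theorem theorem2p2:
  shows "signed_product_cordial (splitting_vertices bull_vertices) (splitting_edges bull_edges)"
  unfolding signed_product_cordial_def signed_product_cordial_labeling_def
  using C L by (intro exI[of _ lab]) simp

end
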